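(* Let $X$ be a Baire topological space, $Y$ a metric space and $\mathcal F\subseteq Y^X$. (1) If $\mathcal F$ is equi-cliquish, then $EC(\mathcal F)$ is a dense $G_\delta$ subset of $X$; in particular this holds if $\mathcal F$ is equi-GLP. (2) If $X$ is a metric space and $\mathcal F$ is equi-Baire 1, then $EC(\mathcal F)$ is a dense $G_\delta$ subset of $X$.
   Context: $EC(\mathcal F)$ denotes the set of points $x\in X$ at which $\mathcal F$ is equicontinuous: for every $\varepsilon>0$ there is a neighborhood $U$ of $x$ with $d(f(x'),f(x))<\varepsilon$ for all $x'\in U$, $f\in\mathcal F$. A space is Baire if every nonempty open subset is nonmeager. A family of subsets of $X$ is discrete if each point has a neighborhood meeting at most one member; $\sigma$-discrete if it is a countable union of discrete families. $\mathcal F\subseteq Y^X$ (with $(Y,d)$ metric) is equi-GLP if for every $\varepsilon>0$ there is a $\sigma$-discrete family $\mathcal A_\varepsilon$ of closed subsets of $X$ with $X=\bigcup\mathcal A_\varepsilon$ and $\operatorname{diam}f(A)\le\varepsilon$ for all $A\in\mathcal A_\varepsilon$ and all $f\in\mathcal F$; equi-cliquish if for every $\varepsilon>0$ and every nonempty open $U\subseteq X$ there is a nonempty open $O\subseteq U$ with $\operatorname{diam}f(O)<\varepsilon$ for all $f\in\mathcal F$; for $X$ metric with metric $\rho$, equi-Baire 1 if for every $\varepsilon>0$ there is $\delta_\varepsilon\colon X\to(0,\infty)$ such that for all $x,y\in X$ and $f\in\mathcal F$, $\rho(x,y)<\min\{\delta_\varepsilon(x),\delta_\varepsilon(y)\}$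 implies $d(f(x),f(y))<\varepsilon$. *)

theory Defs
  imports "HOL-Analysis.Analysis"
begin

definition nowhere_dense_in :: "'a topology \<Rightarrow> 'a set \<Rightarrow> bool" where
  "nowhere_dense_in X S \<longleftrightarrow> S \<subseteq> topspace X \<and> X interior_of (X closure_of S) = {}"

definition meager_in :: "'a topology \<Rightarrow> 'a set \<Rightarrow> bool" where
  "meager_in X S \<longleftrightarrow> S \<subseteq> topspace X \<and>
     (\<exists>\<N>. countable \<N> \<and> (\<forall>N\<in>\<N>. nowhere_dense_in X N) \<and> S \<subseteq> \<Union>\<N>)"

definition Baire_space :: "'a topology \<Rightarrow> bool" where
  "Baire_space X \<longleftrightarrow> (\<forall>U. openin X U \<and> U \<noteq> {} \<longrightarrow> \<not> meager_in X U)"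

text \<open>Diameter with values in the extended reals (so unbounded sets have diameter \<infinity>;
  the empty set has diameter -\<infinity>, which is harmless for upper bounds).\<close>
definition ediam :: "'b::metric_space set \<Rightarrow> ereal" where
  "ediam S = (SUP p\<in>S \<times> S. ereal (dist (fst p) (snd p)))"

definition EC :: "'a topology \<Rightarrow> ('a \<Rightarrow> 'b::metric_space) set \<Rightarrow> 'a set" where
  "EC X F = {x \<in> topspace X. \<forall>\<epsilon>>0. \<exists>U. openin X U \<and> x \<in> U \<and>
              (\<forall>x'\<in>U. \<forall>f\<in>F. dist (f x') (f x) < \<epsilon>)}"

definition discrete_family_in :: "'a topology \<Rightarrow> 'a set set \<Rightarrow> bool" where
  "discrete_family_in X \<A> \<longleftrightarrow> (\<forall>x\<in>topspace X. \<exists>U. openin X U \<and> x \<in> U \<and>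
      (\<forall>A\<in>\<A>. \<forall>B\<in>\<A>. A \<inter> U \<noteq> {} \<and> B \<inter> U \<noteq> {} \<longrightarrow> A = B))"

definition sigma_discrete_in :: "'a topology \<Rightarrow> 'a set set \<Rightarrow> bool" where
  "sigma_discrete_in X \<A> \<longleftrightarrow>
     (\<exists>\<D> :: nat \<Rightarrow> 'a set set. (\<forall>n. discrete_family_in X (\<D> n)) \<and> \<A> = (\<Union>n. \<D> n))"

definition equi_GLP :: "'a topology \<Rightarrow> ('a \<Rightarrow> 'b::metric_space) set \<Rightarrow> bool" where
  "equi_GLP X F \<longleftrightarrow> (\<forall>\<epsilon>>0. \<exists>\<A>. sigma_discrete_in X \<A> \<and> (\<forall>A\<in>\<A>. closedin X A) \<and>
      \<Union>\<A> = topspace X \<and> (\<forall>A\<in>\<A>. \<forall>f\<in>F. ediam (f ` A) \<le> ereal \<epsilon>))"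

definition equi_cliquish :: "'a topology \<Rightarrow> ('a \<Rightarrow> 'b::metric_space) set \<Rightarrow> bool" where
  "equi_cliquish X F \<longleftrightarrow> (\<forall>\<epsilon>>0. \<forall>U. openin X U \<and> U \<noteq> {} \<longrightarrow>
      (\<exists>V. openin X V \<and> V \<noteq> {} \<and> V \<subseteq> U \<and> (\<forall>f\<in>F. ediam (f ` V) < ereal \<epsilon>)))"

definition equi_Baire1 :: "'a set \<Rightarrow> ('a \<Rightarrow> 'a \<Rightarrow> real) \<Rightarrow> ('a \<Rightarrow> 'b::metric_space) set \<Rightarrow> bool" where
  "equi_Baire1 M \<rho> F \<longleftrightarrow> (\<forall>\<epsilon>>0. \<exists>\<delta>. (\<forall>x\<in>M. \<delta> x > 0) \<and>
      (\<forall>x\<in>M. \<forall>y\<in>M. \<forall>f\<in>F. \<rho> x y < min (\<delta> x) (\<delta> y) \<longrightarrow> dist (f x) (f y) < \<epsilon>))"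

end

theory Submission
  imports Defs
begin

lemma ediam_ge: "x \<in> S \<Longrightarrow> y \<in> S \<Longrightarrow> ereal (dist x y) \<le> ediam S"
  unfolding ediam_def by (rule SUP_upper2[where i="(x,y)"]) auto

lemma ediam_le: "(\<And>x y. x \<in> S \<Longrightarrow> y \<in> S \<Longrightarrow> dist x y \<le> e) \<Longrightarrow> ediam S \<le> ereal e"
  unfolding ediam_def by (rule SUP_least) auto

lemma ediam_mono: "S \<subseteq> T \<Longrightarrow> ediam S \<le> ediam T"
  unfolding ediam_def by (rule SUP_subset_mono) auto

lemma baire_pick:
  assumes "Baire_space X" "openin X U" "U \<noteq> {}" "U \<subseteq> (\<Union>n. S n)"
  shows "\<exists>n::nat. X interior_of (X closure_of (U \<inter> S n)) \<noteq> {}"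
proof (rule ccontr)
  assume "\<not> ?thesis"
  then have "\<forall>N\<in>range (\<lambda>n. U \<inter> S n). nowhere_dense_in X N"
    using openin_subset[OF assms(2)] by (auto simp: nowhere_dense_in_def)
  then have "meager_in X U"
    unfolding meager_in_def using openin_subset[OF assms(2)] assms(4)
    by (intro conjI exI[of _ "range (\<lambda>n. U \<inter> S n)"]) auto
  then show False using assms(1,2,3) unfolding Baire_space_def by simp
qed

lemma baire_dense:
  assumes "Baire_space X" "\<And>n::nat. openin X (G n)" "\<And>n. X closure_of (G n) = topspace X"
  shows "X closure_of (\<Inter>n. G n) = topspace X"
  unfolding dense_intersects_open
proof (intro allI impI)
  fix W assume W: "openin X W \<and> W \<noteq> {}"
  show "(\<Inter>n. G n) \<inter> W \<noteq> {}"
  proof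
    assume e: "(\<Inter>n. G n) \<inter> W = {}"
    have "W \<subseteq> topspace X" using W openin_subset by auto
    then have "W \<subseteq> (\<Union>n. topspace X - G n)" using e by blast
    then obtain n where n: "X interior_of (X closure_of (W \<inter> (topspace X - G n))) \<noteq> {}"
      using baire_pick[OF assms(1)] W by blast
    have "X closure_of (W \<inter> (topspace X - G n)) \<subseteq> topspace X - G n"
      by (rule closure_of_minimal) (auto simp: assms(2) closedin_diff)
    then have "X interior_of (X closure_of (W \<inter> (topspace X - G n))) \<subseteq> X interior_of (topspace X - G n)"
      by (rule interior_of_mono)
    also have "\<dots> = {}" by (simp add: interior_of_complement assms(3))
    finally show False using n by blast
  qed
qed

lemma open_meets_closure:
  assumes "openin X W" "W \<noteq> {}" "W \<subseteq> X closure_of U" "openin X U"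
  shows "W \<inter> U \<noteq> {}"
  using openin_Int_closure_of_eq_empty[OF assms(1), of U] assms(2,3) by blast

lemma cliquish_EC:
  fixes X :: "'a topology" and F :: "('a \<Rightarrow> 'b::metric_space) set"
  assumes B: "Baire_space X" and C: "equi_cliquish X F"
  shows "X closure_of (EC X F) = topspace X \<and> gdelta_in X (EC X F)"
proof -
  define G where "G n = \<Union>{V. openin X V \<and> (\<forall>f\<in>F. ediam (f`V) < ereal (1/Suc n))}" for n :: nat
  have Gopen: "openin X (G n)" for n unfolding G_def by (rule openin_Union) auto
  have Gdense: "X closure_of (G n) = topspace X" for n
    unfolding dense_intersects_open
  proof (intro allI impI)
    fix T assume T: "openin X T \<and> T \<noteq> {}"
    then obtain V where V: "openin X V" "V \<noteq> {}" "V \<subseteq> T" "\<forall>f\<in>F. ediam (f`V) < ereal (1/Suc n)"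
      using C T unfolding equi_cliquish_def
      by (metis (no_types, lifting) of_nat_0_less_iff zero_less_Suc divide_pos_pos zero_less_one)
    then have "V \<subseteq> G n" unfolding G_def by blast
    then show "G n \<inter> T \<noteq> {}" using V by blast
  qed
  have EQ: "EC X F = (\<Inter>n. G n)"
  proof
    show "EC X F \<subseteq> (\<Inter>n. G n)"
    proof
      fix x assume x: "x \<in> EC X F"
      show "x \<in> (\<Inter>n. G n)"
      proof
        fix n :: nat
        have "(0::real) < 1 / (3 * Suc n)" by simp
        then obtain U where U: "openin X U" "x \<in> U" "\<forall>x'\<in>U. \<forall>f\<in>F. dist (f x') (f x) < 1 / (3 * Suc n)"
          using x unfolding EC_def by blast
        have "ediam (f`U) < ereal (1/Suc n)" if f: "f \<in> F" for f
        proof -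
          have "ediam (f`U) \<le> ereal (2 / (3 * Suc n))"
          proof (rule ediam_le)
            fix a b assume "a \<in> f`U" "b \<in> f`U"
            then obtain y z where yz: "y \<in> U" "z \<in> U" "a = f y" "b = f z" by blast
            have "dist a b \<le> dist (f y) (f x) + dist (f z) (f x)" using yz dist_triangle2 by metis
            also have "\<dots> \<le> 1 / (3 * Suc n) + 1 / (3 * Suc n)" using U(3) yz f by (intro add_mono less_imp_le) auto
            finally show "dist a b \<le> 2 / (3 * Suc n)" by simp
          qed
          also have "\<dots> < ereal (1/Suc n)" by (simp add: field_simps)
          finally show ?thesis .
        qed
        then show "x \<in> G n" unfolding G_def using U by blast
      qed
    qed
  next
    show "(\<Inter>n. G n) \<subseteq> EC X F"
    proof
      fix x assume x: "x \<in> (\<Inter>n. G n)"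
      have "x \<in> topspace X" using x Gopen[of 0] openin_subset by blast
      moreover have "\<exists>U. openin X U \<and> x \<in> U \<and> (\<forall>x'\<in>U. \<forall>f\<in>F. dist (f x') (f x) < e)" if e: "e > 0" for e
      proof -
        obtain n where n: "1 / Suc n < e" using e nat_approx_posE by blast
        have "x \<in> G n" using x by blast
        then obtain V where V: "openin X V" "x \<in> V" "\<forall>f\<in>F. ediam (f`V) < ereal (1/Suc n)"
          unfolding G_def by blast
        have "\<forall>x'\<in>V. \<forall>f\<in>F. dist (f x') (f x) < e"
        proof (intro ballI)
          fix x' f assume "x' \<in> V" "f \<in> F"
          then have "ereal (dist (f x') (f x)) \<le> ediam (f`V)"
            using V by (intro ediam_ge) auto
          also have "\<dots> < ereal (1/Suc n)" using V \<open>f \<in> F\<close> by blast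
          finally have "ereal (dist (f x') (f x)) < ereal (1/Suc n)" .
          then show "dist (f x') (f x) < e" using n by simp
        qed
        then show ?thesis using V by blast
      qed
      ultimately show "x \<in> EC X F" unfolding EC_def by blast
    qed
  qed
  show ?thesis
  proof
    show "X closure_of EC X F = topspace X" unfolding EQ by (rule baire_dense[OF B Gopen Gdense])
    show "gdelta_in X (EC X F)" unfolding EQ
      by (rule gdelta_in_Inter) (auto intro: open_imp_gdelta_in Gopen)
  qed
qed

lemma GLP_cliquish:
  fixes X :: "'a topology" and F :: "('a \<Rightarrow> 'b::metric_space) set"
  assumes B: "Baire_space X" and GL: "equi_GLP X F"
  shows "equi_cliquish X F"
  unfolding equi_cliquish_def
proof (intro allI impI)
  fix e :: real and U assume e: "e > 0" and U: "openin X U \<and> U \<noteq> {}"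
  have he: "e/2 > 0" using e by simp
  obtain \<A> where A: "sigma_discrete_in X \<A>" "\<forall>A\<in>\<A>. closedin X A" "\<Union>\<A> = topspace X"
     "\<forall>A\<in>\<A>. \<forall>f\<in>F. ediam (f ` A) \<le> ereal (e/2)"
    using GL[unfolded equi_GLP_def, rule_format, OF he] by auto
  obtain D :: "nat \<Rightarrow> 'a set set" where D: "\<And>n. discrete_family_in X (D n)" "\<A> = (\<Union>n. D n)"
    using A(1) unfolding sigma_discrete_in_def by blast
  have Utop: "U \<subseteq> topspace X" using U openin_subset by blast
  have "U \<subseteq> (\<Union>n. \<Union>(D n))" using Utop A(3) D(2) by blast
  then obtain n where n: "X interior_of (X closure_of (U \<inter> \<Union>(D n))) \<noteq> {}"
    using baire_pick[OF B] U by blast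
  define W0 where "W0 = X interior_of (X closure_of (U \<inter> \<Union>(D n)))"
  have W0o: "openin X W0" unfolding W0_def by simp
  have W0c: "W0 \<subseteq> X closure_of (U \<inter> \<Union>(D n))" unfolding W0_def by (rule interior_of_subset)
  also have "\<dots> \<subseteq> X closure_of U" by (rule closure_of_mono) blast
  finally have "W0 \<subseteq> X closure_of U" .
  moreover have "W0 \<noteq> {}" using n W0_def by simp
  ultimately have "W0 \<inter> U \<noteq> {}" using open_meets_closure[OF W0o] U by simp
  then obtain x where x: "x \<in> W0" "x \<in> U" by blast
  then have xtop: "x \<in> topspace X" using Utop by blast
  have "\<exists>N. openin X N \<and> x \<in> N \<and> (\<forall>A\<in>D n. \<forall>B\<in>D n. A \<inter> N \<noteq> {} \<and> B \<inter> N \<noteq> {} \<longrightarrow> A = B)"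
    using D(1)[of n] xtop unfolding discrete_family_in_def by (rule bspec)
  then obtain N where N: "openin X N" "x \<in> N"
     "\<forall>A\<in>D n. \<forall>B\<in>D n. A \<inter> N \<noteq> {} \<and> B \<inter> N \<noteq> {} \<longrightarrow> A = B"
    by (elim exE conjE) simp
  define V where "V = W0 \<inter> U \<inter> N"
  have Vo: "openin X V" unfolding V_def using W0o U N by (intro openin_Int) auto
  have xV: "x \<in> V" unfolding V_def using x N by blast
  have "x \<in> X closure_of (U \<inter> \<Union>(D n))" using x W0c by blast
  then have "(U \<inter> \<Union>(D n)) \<inter> V \<noteq> {}" using Vo xV unfolding in_closure_of by blast
  then obtain A where AD: "A \<in> D n" and AV: "A \<inter> V \<noteq> {}" by blast
  have VsubA: "V \<inter> \<Union>(D n) \<subseteq> A"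
  proof
    fix z assume "z \<in> V \<inter> \<Union>(D n)"
    then obtain B where "B \<in> D n" "z \<in> B" "z \<in> V" by blast
    then have "B \<inter> N \<noteq> {}" "A \<inter> N \<noteq> {}" using AV unfolding V_def by blast+
    then have "A = B" using N(3) AD \<open>B \<in> D n\<close> by blast
    then show "z \<in> A" using \<open>z \<in> B\<close> by simp
  qed
  have Acl: "closedin X A" using A(2) D(2) AD by blast
  have VA: "V \<subseteq> A"
  proof
    fix y assume y: "y \<in> V"
    then have "y \<in> X closure_of (U \<inter> \<Union>(D n))" using W0c unfolding V_def by blast
    then have "y \<in> V \<inter> X closure_of (U \<inter> \<Union>(D n))" using y by blast
    also have "\<dots> \<subseteq> X closure_of (V \<inter> (U \<inter> \<Union>(D n)))" by (rule openin_Int_closure_of_subset[OF Vo])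
    also have "\<dots> \<subseteq> X closure_of A" by (rule closure_of_mono) (use VsubA in blast)
    also have "\<dots> = A" using Acl by (simp add: closure_of_closedin)
    finally show "y \<in> A" .
  qed
  show "\<exists>V. openin X V \<and> V \<noteq> {} \<and> V \<subseteq> U \<and> (\<forall>f\<in>F. ediam (f ` V) < ereal e)"
  proof (intro exI conjI ballI)
    show "openin X V" by (rule Vo)
    show "V \<noteq> {}" using xV by blast
    show "V \<subseteq> U" unfolding V_def by blast
    fix f assume f: "f \<in> F"
    have "ediam (f`V) \<le> ediam (f`A)" using VA by (intro ediam_mono) blast
    also have "\<dots> \<le> ereal (e/2)" using A(4) D(2) AD f by blast
    also have "\<dots> < ereal e" using e by simp
    finally show "ediam (f ` V) < ereal e" .
  qed
qed

lemma (in Metric_space) Baire1_cliquish: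
  fixes F :: "('a \<Rightarrow> 'b::metric_space) set"
  assumes B: "Baire_space mtopology" and EB: "equi_Baire1 M d F"
  shows "equi_cliquish mtopology F"
  unfolding equi_cliquish_def
proof (intro allI impI)
  fix e :: real and U assume e: "e > 0" and U: "openin mtopology U \<and> U \<noteq> {}"
  have he: "e/4 > 0" using e by simp
  obtain \<delta> where dpos: "\<forall>x\<in>M. \<delta> x > 0" and
    dB: "\<forall>x\<in>M. \<forall>y\<in>M. \<forall>f\<in>F. d x y < min (\<delta> x) (\<delta> y) \<longrightarrow> dist (f x) (f y) < e/4"
    using EB[unfolded equi_Baire1_def, rule_format, OF he] by (elim exE conjE) simp
  define E where "E k = {x\<in>M. \<delta> x > 1 / Suc k}" for k :: nat
  have UM: "U \<subseteq> M" using U openin_mtopology by blast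
  have "U \<subseteq> (\<Union>k. E k)"
  proof
    fix x assume "x \<in> U"
    then have xM: "x \<in> M" using UM by blast
    then obtain k where "1 / Suc k < \<delta> x" using dpos nat_approx_posE by blast
    then show "x \<in> (\<Union>k. E k)" using xM unfolding E_def by blast
  qed
  then obtain k where k: "mtopology interior_of (mtopology closure_of (U \<inter> E k)) \<noteq> {}"
    using baire_pick[OF B] U by blast
  define W0 where "W0 = mtopology interior_of (mtopology closure_of (U \<inter> E k))"
  have W0o: "openin mtopology W0" unfolding W0_def by simp
  have W0c: "W0 \<subseteq> mtopology closure_of (U \<inter> E k)" unfolding W0_def by (rule interior_of_subset)
  also have "\<dots> \<subseteq> mtopology closure_of U" by (rule closure_of_mono) blast
  finally have "W0 \<subseteq> mtopology closure_of U" .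
  moreover have "W0 \<noteq> {}" using k W0_def by simp
  ultimately have "W0 \<inter> U \<noteq> {}" using open_meets_closure[OF W0o] U by simp
  then obtain x where x: "x \<in> W0" "x \<in> U" by blast
  have "openin mtopology (W0 \<inter> U)" using W0o U by (intro openin_Int) auto
  then obtain r0 where r0: "r0 > 0" "mball x r0 \<subseteq> W0 \<inter> U"
    using x unfolding openin_mtopology by blast
  define r where "r = min r0 (1 / (2 * Suc k))"
  have rpos: "r > 0" unfolding r_def using r0 by simp
  define V where "V = mball x r"
  have xM: "x \<in> M" using x UM by blast
  have VW: "V \<subseteq> W0 \<inter> U" using r0 unfolding V_def r_def by auto
  have Vo: "openin mtopology V" unfolding V_def by simp
  have xV: "x \<in> V" unfolding V_def using xM rpos by simp
  have approx: "\<exists>y'\<in>E k \<inter> V. dist (f y) (f y') < e/4" if y: "y \<in> V" "f \<in> F" for y f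
  proof -
    have yM: "y \<in> M" using y(1) unfolding V_def by simp
    define s where "s = min (\<delta> y) (1 / Suc k)"
    have spos: "s > 0" unfolding s_def using dpos yM by simp
    have cl: "y \<in> mtopology closure_of (U \<inter> E k)" using y W0c VW by blast
    have op: "openin mtopology (V \<inter> mball y s)" using Vo by (intro openin_Int) auto
    have yin: "y \<in> V \<inter> mball y s" using y yM spos by simp
    have "\<forall>T. y \<in> T \<and> openin mtopology T \<longrightarrow> (\<exists>y. y \<in> U \<inter> E k \<and> y \<in> T)"
      using cl unfolding in_closure_of by (rule conjunct2)
    then have "y \<in> V \<inter> mball y s \<and> openin mtopology (V \<inter> mball y s) \<longrightarrow> (\<exists>y'. y' \<in> U \<inter> E k \<and> y' \<in> V \<inter> mball y s)"
      by (rule spec)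
    then have "\<exists>y'. y' \<in> U \<inter> E k \<and> y' \<in> V \<inter> mball y s" using op yin by blast
    then obtain y' where y': "y' \<in> E k" "y' \<in> V" "y' \<in> mball y s" by blast
    have y'M: "y' \<in> M" and dy': "\<delta> y' > 1 / Suc k" using y'(1) unfolding E_def by auto
    have "d y y' < s" using y'(3) by simp
    also have "s \<le> min (\<delta> y) (\<delta> y')" unfolding s_def using dy' by simp
    finally have "dist (f y) (f y') < e/4" using dB[rule_format, OF yM y'M y(2)] by blast
    then show ?thesis using y' by blast
  qed
  have core: "dist (f y') (f z') < e/4" if "y' \<in> E k \<inter> V" "z' \<in> E k \<inter> V" "f \<in> F" for y' z' f
  proof -
    have yM: "y' \<in> M" "z' \<in> M" "\<delta> y' > 1 / Suc k" "\<delta> z' > 1 / Suc k"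
      using that unfolding E_def by auto
    have "d y' z' \<le> d y' x + d x z'" using triangle yM xM by blast
    also have "\<dots> < r + r" using that unfolding V_def by (simp add: commute add_strict_mono)
    also have "\<dots> \<le> 1 / Suc k"
    proof -
      have "r \<le> 1 / (2 * Suc k)" by (simp add: r_def)
      from this this have "r + r \<le> 1 / (2 * Suc k) + 1 / (2 * Suc k)" by (rule add_mono)
      also have "\<dots> = 1 / Suc k" by (simp add: field_simps)
      finally show ?thesis .
    qed
    finally have "d y' z' < min (\<delta> y') (\<delta> z')" using yM by simp
    then show ?thesis using dB yM that(3) by blast
  qed
  show "\<exists>V. openin mtopology V \<and> V \<noteq> {} \<and> V \<subseteq> U \<and> (\<forall>f\<in>F. ediam (f ` V) < ereal e)"
  proof (intro exI conjI ballI)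
    show "openin mtopology V" by (rule Vo)
    show "V \<noteq> {}" using xV by blast
    show "V \<subseteq> U" using VW by blast
    fix f assume f: "f \<in> F"
    have "ediam (f`V) \<le> ereal (3 * (e/4))"
    proof (rule ediam_le)
      fix a b assume "a \<in> f`V" "b \<in> f`V"
      then obtain y z where yz: "y \<in> V" "z \<in> V" "a = f y" "b = f z" by blast
      obtain y' where y': "y' \<in> E k \<inter> V" "dist (f y) (f y') < e/4" using approx yz f by blast
      obtain z' where z': "z' \<in> E k \<inter> V" "dist (f z) (f z') < e/4" using approx yz f by blast
      have "dist (f y) (f z) \<le> dist (f y) (f y') + dist (f y') (f z') + dist (f z') (f z)"
        by (metis dist_triangle add_le_cancel_left order_trans add.assoc)
      also have "\<dots> < e/4 + e/4 + e/4" using y' z' core[OF y'(1) z'(1) f]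
        by (simp add: dist_commute add_strict_mono)
      finally show "dist a b \<le> 3 * (e/4)" using yz by simp
    qed
    also have "\<dots> < ereal e" using e by simp
    finally show "ediam (f ` V) < ereal e" .
  qed
qed

theorem proposition3p7:
  fixes X :: "'a topology" and F :: "('a \<Rightarrow> 'b::metric_space) set"
  assumes "Baire_space X"
  shows "(equi_cliquish X F \<longrightarrow> X closure_of (EC X F) = topspace X \<and> gdelta_in X (EC X F))
       \<and> (equi_GLP X F \<longrightarrow> X closure_of (EC X F) = topspace X \<and> gdelta_in X (EC X F))
       \<and> (\<forall>M \<rho>. Metric_space M \<rho> \<and> X = Metric_space.mtopology M \<rho> \<and> equi_Baire1 M \<rho> F \<longrightarrow>
            X closure_of (EC X F) = topspace X \<and> gdelta_in X (EC X F))"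
proof -
  have A: "equi_cliquish X F \<longrightarrow> X closure_of (EC X F) = topspace X \<and> gdelta_in X (EC X F)"
    using cliquish_EC[OF assms] by blast
  have B: "equi_GLP X F \<longrightarrow> X closure_of (EC X F) = topspace X \<and> gdelta_in X (EC X F)"
    using cliquish_EC[OF assms] GLP_cliquish[OF assms] by blast
  have C: "\<forall>M \<rho>. Metric_space M \<rho> \<and> X = Metric_space.mtopology M \<rho> \<and> equi_Baire1 M \<rho> F \<longrightarrow>
            X closure_of (EC X F) = topspace X \<and> gdelta_in X (EC X F)"
  proof (intro allI impI)
    fix M \<rho>
    assume h: "Metric_space M \<rho> \<and> X = Metric_space.mtopology M \<rho> \<and> equi_Baire1 M \<rho> F"
    then have "equi_cliquish X F"
      using Metric_space.Baire1_cliquish[of M \<rho> F] assms by blast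
    then show "X closure_of (EC X F) = topspace X \<and> gdelta_in X (EC X F)"
      using cliquish_EC[OF assms] by blast
  qed
  show ?thesis using A B C by blast
qed

end
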